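(* Let $G=(V,E)$ be a finite simple graph with at least one vertex and $k>0$ an integer. Let $\mathcal F$ be the set of all sets $\{(A_1,B_1),(A_2,B_2),(A_3,B_3)\}\subseteq\vec S_k$ (the three elements not necessarily distinct) with $G[A_1]\cup G[A_2]\cup G[A_3]=G$, and let $\mathcal F^*\subseteq\mathcal F$ be the set of those elements of $\mathcal F$ that are stars. Then every consistent orientation of $S_k$ that avoids $\mathcal F^*$ also avoids $\mathcal F$.
   Context: An oriented vertex separation of $G$ is an ordered pair $(A,B)$ with $A\cup B=V$ and no edge of $G$ between $A\setminus B$ and $B\setminus A$. These are partially ordered by $(A,B)\le(C,D)$ iff $A\subseteq C$ and $B\supseteq D$, with involution $(A,B)^*=(B,A)$. $\vec S_k$ is the set of oriented vertex separations $(A,B)$ with $|A\cap B|<k$, and $S_k$ the set of unordered pairs $\{(A,B),(B,A)\}$ with $(A,B)\in\vec S_k$. An orientation of $S_k$ is a set $O\subseteq\vec S_k$ containing exactly one of $(A,B),(B,A)$ for each such pair. $O$ is consistent if there are no distinct separations $r,s\in S_k$ with orientations $\vec r<\vec s$ such that $\vec r^{\,*},\vec s\in O$. A star is a nonempty set $\sigma$ of oriented separations with $\vec r\le\vec s^{\,*}$ for all distinct $\vec r,\vec s\in\sigma$. $O$ avoids a family $\mathcal F$ if no subset of $O$ lies in $\mathcal F$. $G[A]$ denotes the induced subgraph. *)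

theory Defs
  imports Main
begin

definition simple_graph :: "'a set \<Rightarrow> 'a set set \<Rightarrow> bool" where
  "simple_graph V E \<longleftrightarrow> finite V \<and> (\<forall>e\<in>E. card e = 2 \<and> e \<subseteq> V)"

type_synonym 'a sep = "'a set \<times> 'a set"

definition is_sep :: "'a set \<Rightarrow> 'a set set \<Rightarrow> 'a sep \<Rightarrow> bool" where
  "is_sep V E s \<longleftrightarrow> (case s of (A, B) \<Rightarrow>
     A \<union> B = V \<and> (\<forall>x\<in>A - B. \<forall>y\<in>B - A. {x, y} \<notin> E))"

definition inv_sep :: "'a sep \<Rightarrow> 'a sep" where
  "inv_sep s = (snd s, fst s)"

definition sep_le :: "'a sep \<Rightarrow> 'a sep \<Rightarrow> bool" where
  "sep_le s t \<longleftrightarrow> fst s \<subseteq> fst t \<and> snd t \<subseteq> snd s"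

definition sep_less :: "'a sep \<Rightarrow> 'a sep \<Rightarrow> bool" where
  "sep_less s t \<longleftrightarrow> sep_le s t \<and> s \<noteq> t"

definition Sk :: "'a set \<Rightarrow> 'a set set \<Rightarrow> nat \<Rightarrow> 'a sep set" where
  "Sk V E k = {s. is_sep V E s \<and> card (fst s \<inter> snd s) < k}"

definition is_orientation :: "'a set \<Rightarrow> 'a set set \<Rightarrow> nat \<Rightarrow> 'a sep set \<Rightarrow> bool" where
  "is_orientation V E k Or \<longleftrightarrow> Or \<subseteq> Sk V E k \<and>
     (\<forall>s\<in>Sk V E k. (s \<in> Or \<or> inv_sep s \<in> Or) \<and>
        (s \<noteq> inv_sep s \<longrightarrow> \<not> (s \<in> Or \<and> inv_sep s \<in> Or)))"

definition consistent :: "'a set \<Rightarrow> 'a set set \<Rightarrow> nat \<Rightarrow> 'a sep set \<Rightarrow> bool" where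
  "consistent V E k Or \<longleftrightarrow> \<not> (\<exists>r\<in>Sk V E k. \<exists>s\<in>Sk V E k.
     s \<noteq> r \<and> s \<noteq> inv_sep r \<and> sep_less r s \<and> inv_sep r \<in> Or \<and> s \<in> Or)"

definition is_star :: "'a sep set \<Rightarrow> bool" where
  "is_star \<sigma> \<longleftrightarrow> \<sigma> \<noteq> {} \<and> (\<forall>r\<in>\<sigma>. \<forall>s\<in>\<sigma>. r \<noteq> s \<longrightarrow> sep_le r (inv_sep s))"

definition avoids :: "'a sep set \<Rightarrow> 'a sep set set \<Rightarrow> bool" where
  "avoids Or F \<longleftrightarrow> (\<forall>\<sigma>. \<sigma> \<subseteq> Or \<longrightarrow> \<sigma> \<notin> F)"

definition induced :: "'a set set \<Rightarrow> 'a set \<Rightarrow> 'a set \<times> 'a set set" where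
  "induced E A = (A, {e\<in>E. e \<subseteq> A})"

definition graph_union :: "'a set \<times> 'a set set \<Rightarrow> 'a set \<times> 'a set set \<Rightarrow> 'a set \<times> 'a set set" where
  "graph_union G H = (fst G \<union> fst H, snd G \<union> snd H)"

definition F_cover :: "'a set \<Rightarrow> 'a set set \<Rightarrow> nat \<Rightarrow> 'a sep set set" where
  "F_cover V E k = {{s1, s2, s3} | s1 s2 s3.
     s1 \<in> Sk V E k \<and> s2 \<in> Sk V E k \<and> s3 \<in> Sk V E k \<and>
     graph_union (graph_union (induced E (fst s1)) (induced E (fst s2))) (induced E (fst s3)) = (V, E)}"

definition F_star :: "'a set \<Rightarrow> 'a set set \<Rightarrow> nat \<Rightarrow> 'a sep set set" where
  "F_star V E k = {\<sigma> \<in> F_cover V E k. is_star \<sigma>}"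

end

theory Submission
  imports Defs
begin

definition cov :: "'a set \<Rightarrow> 'a set set \<Rightarrow> 'a set \<Rightarrow> 'a set \<Rightarrow> 'a set \<Rightarrow> bool" where
  "cov V E A1 A2 A3 \<longleftrightarrow> A1 \<union> A2 \<union> A3 = V \<and> (\<forall>e\<in>E. e \<subseteq> A1 \<or> e \<subseteq> A2 \<or> e \<subseteq> A3)"

lemma cov_swap12: "cov V E A B C \<longleftrightarrow> cov V E B A C"
  unfolding cov_def by blast
lemma cov_swap13: "cov V E A B C \<longleftrightarrow> cov V E C B A"
  unfolding cov_def by blast

lemma sep_sub: "is_sep V E s \<Longrightarrow> fst s \<subseteq> V \<and> snd s \<subseteq> V"
  unfolding is_sep_def by (auto split: prod.splits)

lemma graph_eq_cov:
  assumes "simple_graph V E" "A1 \<subseteq> V" "A2 \<subseteq> V" "A3 \<subseteq> V"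
  shows "graph_union (graph_union (induced E A1) (induced E A2)) (induced E A3) = (V, E)
     \<longleftrightarrow> cov V E A1 A2 A3"
  using assms unfolding graph_union_def induced_def cov_def simple_graph_def by auto

lemma corner_sep:
  assumes "is_sep V E (A1,B1)" "is_sep V E (A2,B2)"
  shows "is_sep V E (A1\<inter>B2, B1\<union>A2)"
proof -
  have u1: "A1 \<union> B1 = V" and n1: "\<And>x y. x \<in> A1 - B1 \<Longrightarrow> y \<in> B1 - A1 \<Longrightarrow> {x,y} \<notin> E"
    using assms(1) unfolding is_sep_def by auto
  have u2: "A2 \<union> B2 = V" and n2: "\<And>x y. x \<in> A2 - B2 \<Longrightarrow> y \<in> B2 - A2 \<Longrightarrow> {x,y} \<notin> E"
    using assms(2) unfolding is_sep_def by auto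
  have U: "(A1\<inter>B2) \<union> (B1\<union>A2) = V" using u1 u2 by blast
  have "{x,y} \<notin> E" if x: "x \<in> (A1\<inter>B2) - (B1\<union>A2)" and y: "y \<in> (B1\<union>A2) - (A1\<inter>B2)" for x y
  proof (cases "y \<in> A1")
    case True
    hence "y \<in> A2 - B2" using y u1 u2 by blast
    moreover have "x \<in> B2 - A2" using x by blast
    ultimately show ?thesis using n2 by (metis insert_commute)
  next
    case False
    hence "y \<in> B1 - A1" using y u1 u2 by blast
    moreover have "x \<in> A1 - B1" using x by blast
    ultimately show ?thesis using n1 by blast
  qed
  thus ?thesis using U unfolding is_sep_def by auto
qed

lemma submod:
  assumes "finite V" "A1 \<subseteq> V" "B2 \<subseteq> V" "B1 \<subseteq> V" "A2 \<subseteq> V"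
  shows "card ((A1\<inter>B2) \<inter> (B1\<union>A2)) + card ((A2\<inter>B1) \<inter> (B2\<union>A1))
      \<le> card (A1\<inter>B1) + card (A2\<inter>B2)"
proof -
  let ?X = "(A1\<inter>B2) \<inter> (B1\<union>A2)" and ?Y = "(A2\<inter>B1) \<inter> (B2\<union>A1)"
  let ?P = "A1\<inter>B1" and ?Q = "A2\<inter>B2"
  have fin: "finite ?X" "finite ?Y" "finite ?P" "finite ?Q"
    using assms by (auto intro: finite_subset)
  have "card ?X + card ?Y = card (?X \<union> ?Y) + card (?X \<inter> ?Y)"
    by (rule card_Un_Int) (use fin in auto)
  also have "\<dots> \<le> card (?P \<union> ?Q) + card (?P \<inter> ?Q)"
    apply (rule add_mono)
     apply (rule card_mono) using fin apply blast apply blast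
    apply (rule card_mono) using fin apply blast apply blast
    done
  also have "\<dots> = card ?P + card ?Q"
    by (rule card_Un_Int[symmetric]) (use fin in auto)
  finally show ?thesis .
qed

lemma cover_corner:
  assumes sg: "simple_graph V E" and s2: "is_sep V E (A2,B2)"
    and c: "cov V E A1 A2 A3"
  shows "cov V E (A1\<inter>B2) A2 A3"
proof -
  have u: "A2 \<union> B2 = V" using s2 unfolding is_sep_def by auto
  have ne: "\<And>x y. x \<in> A2 - B2 \<Longrightarrow> y \<in> B2 - A2 \<Longrightarrow> {x,y} \<notin> E"
    using s2 unfolding is_sep_def by auto
  have v: "A1\<inter>B2 \<union> A2 \<union> A3 = V" using c u unfolding cov_def by blast
  have "e \<subseteq> A1\<inter>B2 \<or> e \<subseteq> A2 \<or> e \<subseteq> A3" if e: "e \<in> E" for e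
  proof -
    have "e \<subseteq> A1 \<or> e \<subseteq> A2 \<or> e \<subseteq> A3" using c e unfolding cov_def by blast
    moreover have "e \<subseteq> A2" if "e \<subseteq> A1" "\<not> e \<subseteq> B2"
    proof
      fix z assume z: "z \<in> e"
      obtain w where w: "w \<in> e" "w \<notin> B2" using \<open>\<not> e \<subseteq> B2\<close> by blast
      have eV: "e \<subseteq> V" using sg e unfolding simple_graph_def by blast
      show "z \<in> A2"
      proof (rule ccontr)
        assume "z \<notin> A2"
        hence zB: "z \<in> B2 - A2" using u z eV by blast
        have wA: "w \<in> A2 - B2" using u w eV by blast
        have "card e = 2" using sg e unfolding simple_graph_def by blast
        then obtain a b where ab: "e = {a,b}" "a \<noteq> b" by (meson card_2_iff)
        have "w \<noteq> z" using zB wA by blast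
        hence "e = {w,z}" using ab w z by auto
        thus False using ne[OF wA zB] e by simp
      qed
    qed
    ultimately show ?thesis by blast
  qed
  thus ?thesis using v unfolding cov_def by blast
qed

lemma Or_not_V:
  assumes sg: "simple_graph V E" and o: "is_orientation V E k Or"
    and av: "avoids Or (F_star V E k)" and s: "s \<in> Or"
  shows "fst s \<noteq> V"
proof
  assume fV: "fst s = V"
  have sS: "s \<in> Sk V E k" using o s unfolding is_orientation_def by blast
  have "induced E (fst s) = (V,E)" using fV sg unfolding induced_def simple_graph_def by auto
  hence g: "graph_union (graph_union (induced E (fst s)) (induced E (fst s))) (induced E (fst s)) = (V, E)"
    unfolding graph_union_def by simp
  have "{s,s,s} \<in> F_cover V E k" unfolding F_cover_def using sS g by blast
  moreover have "is_star {s}" unfolding is_star_def by auto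
  ultimately have "{s} \<in> F_star V E k" unfolding F_star_def by simp
  thus False using av s unfolding avoids_def by blast
qed

lemma down_closed:
  assumes o: "is_orientation V E k Or" and c: "consistent V E k Or"
    and nV: "\<forall>s\<in>Or. fst s \<noteq> V"
    and t: "t \<in> Sk V E k" and s: "s \<in> Or" and le: "sep_le t s"
  shows "t \<in> Or"
proof (rule ccontr)
  assume tn: "t \<notin> Or"
  hence it: "inv_sep t \<in> Or" using o t unfolding is_orientation_def by blast
  have sS: "s \<in> Sk V E k" using o s unfolding is_orientation_def by blast
  have ts: "t \<noteq> s" using tn s by blast
  have "s \<noteq> inv_sep t"
  proof
    assume si: "s = inv_sep t"
    have "fst s \<union> snd s = V" using sS unfolding Sk_def is_sep_def by (auto split: prod.splits)
    moreover have "snd s \<subseteq> fst s" using le si unfolding sep_le_def inv_sep_def by auto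
    ultimately show False using nV s by blast
  qed
  hence "t \<in> Sk V E k \<and> s \<in> Sk V E k \<and> s \<noteq> t \<and> s \<noteq> inv_sep t \<and> sep_less t s \<and> inv_sep t \<in> Or \<and> s \<in> Or"
    using t sS ts le it s unfolding sep_less_def by auto
  thus False using c unfolding consistent_def by blast
qed

definition mu :: "'a set \<Rightarrow> 'a sep \<Rightarrow> nat" where
  "mu V s = card (fst s) + card (V - snd s)"

lemma mu_less:
  assumes "finite V" "fst s \<subseteq> V" "snd t \<subseteq> V" "snd s \<subseteq> V" "sep_le t s" "t \<noteq> s"
  shows "mu V t < mu V s"
proof -
  have a: "fst t \<subseteq> fst s" "snd s \<subseteq> snd t" using assms(5) unfolding sep_le_def by auto
  have f: "finite (fst s)" using assms finite_subset by blast
  have b: "V - snd t \<subseteq> V - snd s" using a by blast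
  have c1: "card (fst t) \<le> card (fst s)" using a f card_mono by blast
  have c2: "card (V - snd t) \<le> card (V - snd s)" using b assms(1) card_mono by blast
  have "fst t \<noteq> fst s \<or> snd t \<noteq> snd s" using assms(6) by (simp add: prod_eq_iff)
  thus ?thesis
  proof
    assume "fst t \<noteq> fst s"
    hence "card (fst t) < card (fst s)" using a f psubset_card_mono by blast
    thus ?thesis using c2 unfolding mu_def by simp
  next
    assume "snd t \<noteq> snd s"
    hence "V - snd t \<noteq> V - snd s" using a assms(3,4) by blast
    hence "card (V - snd t) < card (V - snd s)" using b assms(1) psubset_card_mono by blast
    thus ?thesis using c1 unfolding mu_def by simp
  qed
qed

lemma pair_step:
  assumes sg: "simple_graph V E" and o: "is_orientation V E k Or" and c: "consistent V E k Or"
    and nV: "\<forall>s\<in>Or. fst s \<noteq> V"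
    and s1: "s1 \<in> Or" and s2: "s2 \<in> Or" and cv: "cov V E (fst s1) (fst s2) A3"
    and nl: "\<not> sep_le s1 (inv_sep s2)"
  shows "\<exists>s1' s2'. s1' \<in> Or \<and> s2' \<in> Or \<and> cov V E (fst s1') (fst s2') A3 \<and>
           mu V s1' + mu V s2' < mu V s1 + mu V s2"
proof -
  obtain A1 B1 where e1: "s1 = (A1,B1)" by fastforce
  obtain A2 B2 where e2: "s2 = (A2,B2)" by fastforce
  have S1: "s1 \<in> Sk V E k" and S2: "s2 \<in> Sk V E k" using o s1 s2 unfolding is_orientation_def by blast+
  have sep1: "is_sep V E (A1,B1)" and sep2: "is_sep V E (A2,B2)"
    using S1 S2 e1 e2 unfolding Sk_def by auto
  have k1: "card (A1\<inter>B1) < k" and k2: "card (A2\<inter>B2) < k"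
    using S1 S2 e1 e2 unfolding Sk_def by auto
  have fV: "finite V" using sg unfolding simple_graph_def by blast
  have sub1: "A1 \<subseteq> V" "B1 \<subseteq> V" using sep_sub[OF sep1] by auto
  have sub2: "A2 \<subseteq> V" "B2 \<subseteq> V" using sep_sub[OF sep2] by auto
  define t1 where "t1 = (A1\<inter>B2, B1\<union>A2)"
  define t2 where "t2 = (A2\<inter>B1, B2\<union>A1)"
  have st1: "is_sep V E t1" unfolding t1_def by (rule corner_sep[OF sep1 sep2])
  have st2: "is_sep V E t2" unfolding t2_def by (rule corner_sep[OF sep2 sep1])
  have sm: "card (fst t1 \<inter> snd t1) + card (fst t2 \<inter> snd t2) \<le> card (A1\<inter>B1) + card (A2\<inter>B2)"
    unfolding t1_def t2_def using submod[OF fV sub1(1) sub2(2) sub1(2) sub2(1)] by simp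
  have nl': "\<not> (A1 \<subseteq> B2 \<and> A2 \<subseteq> B1)" using nl e1 e2 unfolding sep_le_def inv_sep_def by auto
  show ?thesis
  proof (cases "card (fst t1 \<inter> snd t1) < k")
    case True
    hence T: "t1 \<in> Sk V E k" using st1 unfolding Sk_def by simp
    have le: "sep_le t1 s1" unfolding t1_def e1 sep_le_def by auto
    have ne: "t1 \<noteq> s1" using nl' unfolding t1_def e1 by auto
    have tO: "t1 \<in> Or" by (rule down_closed[OF o c nV T s1 le])
    have cv': "cov V E (fst t1) (fst s2) A3"
      unfolding t1_def using cover_corner[OF sg sep2] cv e1 e2 by simp
    have "mu V t1 < mu V s1"
      apply (rule mu_less[OF fV _ _ _ le ne]) using sub1 sep_sub[OF st1] e1 by auto
    thus ?thesis using tO s2 cv' by fastforce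
  next
    case False
    hence "card (fst t2 \<inter> snd t2) < k" using sm k1 k2 by linarith
    hence T: "t2 \<in> Sk V E k" using st2 unfolding Sk_def by simp
    have le: "sep_le t2 s2" unfolding t2_def e2 sep_le_def by auto
    have ne: "t2 \<noteq> s2" using nl' unfolding t2_def e2 by auto
    have tO: "t2 \<in> Or" by (rule down_closed[OF o c nV T s2 le])
    have "cov V E (fst s2) (fst s1) A3" using cv cov_swap12 by metis
    hence "cov V E (A2 \<inter> B1) (fst s1) A3" using cover_corner[OF sg sep1] e1 e2 by simp
    hence cv': "cov V E (fst s1) (fst t2) A3" unfolding t2_def using cov_swap12 by fastforce
    have "mu V t2 < mu V s2"
      apply (rule mu_less[OF fV _ _ _ le ne]) using sub2 sep_sub[OF st2] e2 by auto
    thus ?thesis using tO s1 cv' by fastforce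
  qed
qed

lemma le_inv_sym: "sep_le r (inv_sep s) \<longleftrightarrow> sep_le s (inv_sep r)"
  unfolding sep_le_def inv_sep_def by auto

lemma main:
  assumes sg: "simple_graph V E" and o: "is_orientation V E k Or" and c: "consistent V E k Or"
    and av: "avoids Or (F_star V E k)"
  shows "\<forall>s1 s2 s3. mu V s1 + mu V s2 + mu V s3 = n \<longrightarrow> s1 \<in> Or \<longrightarrow> s2 \<in> Or \<longrightarrow> s3 \<in> Or
     \<longrightarrow> cov V E (fst s1) (fst s2) (fst s3) \<longrightarrow> False"
proof (induction n rule: less_induct)
  case (less n)
  have nV: "\<forall>s\<in>Or. fst s \<noteq> V" using Or_not_V[OF sg o av] by blast
  show ?case
  proof (intro allI impI)
    fix s1 s2 s3 assume n: "mu V s1 + mu V s2 + mu V s3 = n" and i: "s1 \<in> Or" "s2 \<in> Or" "s3 \<in> Or"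
      and cv: "cov V E (fst s1) (fst s2) (fst s3)"
    have S: "s1 \<in> Sk V E k" "s2 \<in> Sk V E k" "s3 \<in> Sk V E k"
      using o i unfolding is_orientation_def by blast+
    have sub: "fst s1 \<subseteq> V" "fst s2 \<subseteq> V" "fst s3 \<subseteq> V"
      using S unfolding Sk_def by (auto dest: sep_sub)
    show False
    proof (cases "is_star {s1,s2,s3}")
      case True
      have g: "graph_union (graph_union (induced E (fst s1)) (induced E (fst s2))) (induced E (fst s3)) = (V, E)"
        by (rule graph_eq_cov[OF sg sub, THEN iffD2, OF cv])
      have "\<exists>a b c. {s1,s2,s3} = {a,b,c} \<and> a \<in> Sk V E k \<and> b \<in> Sk V E k \<and> c \<in> Sk V E k \<and>
         graph_union (graph_union (induced E (fst a)) (induced E (fst b))) (induced E (fst c)) = (V, E)"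
        using S g by blast
      hence "{s1,s2,s3} \<in> F_cover V E k"
        unfolding F_cover_def by (rule CollectI)
      hence "{s1,s2,s3} \<in> F_star V E k" using True unfolding F_star_def by (intro CollectI conjI)
      moreover have "{s1,s2,s3} \<subseteq> Or" using i by blast
      ultimately show False using av unfolding avoids_def by blast
    next
      case False
      have "sep_le s1 (inv_sep s2) \<Longrightarrow> sep_le s1 (inv_sep s3) \<Longrightarrow> sep_le s2 (inv_sep s3) \<Longrightarrow> is_star {s1,s2,s3}"
        unfolding is_star_def by (simp, metis le_inv_sym)
      hence "\<not> sep_le s1 (inv_sep s2) \<or> \<not> sep_le s1 (inv_sep s3) \<or> \<not> sep_le s2 (inv_sep s3)"
        using False by blast
      thus False
      proof (elim disjE)
        assume h: "\<not> sep_le s1 (inv_sep s2)"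
        obtain a b where ab: "a \<in> Or" "b \<in> Or" "cov V E (fst a) (fst b) (fst s3)"
          "mu V a + mu V b < mu V s1 + mu V s2"
          using pair_step[OF sg o c nV i(1,2) cv h] by blast
        have "mu V a + mu V b + mu V s3 < n" using ab(4) n by linarith
        from less[OF this] show False using ab i by blast
      next
        assume h: "\<not> sep_le s1 (inv_sep s3)"
        have cv2: "cov V E (fst s1) (fst s3) (fst s2)" using cv unfolding cov_def by blast
        obtain a b where ab: "a \<in> Or" "b \<in> Or" "cov V E (fst a) (fst b) (fst s2)"
          "mu V a + mu V b < mu V s1 + mu V s3"
          using pair_step[OF sg o c nV i(1,3) cv2 h] by blast
        have "cov V E (fst a) (fst s2) (fst b)" using ab(3) unfolding cov_def by blast
        have "mu V a + mu V s2 + mu V b < n" using ab(4) n by linarith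
        from less[OF this] show False using ab i \<open>cov V E (fst a) (fst s2) (fst b)\<close> by blast
      next
        assume h: "\<not> sep_le s2 (inv_sep s3)"
        have cv2: "cov V E (fst s2) (fst s3) (fst s1)" using cv unfolding cov_def by blast
        obtain a b where ab: "a \<in> Or" "b \<in> Or" "cov V E (fst a) (fst b) (fst s1)"
          "mu V a + mu V b < mu V s2 + mu V s3"
          using pair_step[OF sg o c nV i(2,3) cv2 h] by blast
        have "cov V E (fst s1) (fst a) (fst b)" using ab(3) unfolding cov_def by blast
        have "mu V s1 + mu V a + mu V b < n" using ab(4) n by linarith
        from less[OF this] show False using ab i \<open>cov V E (fst s1) (fst a) (fst b)\<close> by blast
      qed
    qed
  qed
qed

theorem lemma5p2:
  fixes V :: "'a set" and E :: "'a set set" and k :: nat and Or :: "('a set \<times> 'a set) set"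
  assumes "simple_graph V E" and "V \<noteq> {}" and "k > 0"
    and "is_orientation V E k Or" and "consistent V E k Or"
    and "avoids Or (F_star V E k)"
  shows "avoids Or (F_cover V E k)"
  unfolding avoids_def
proof (intro allI impI notI)
  fix \<sigma> assume sO: "\<sigma> \<subseteq> Or" and sF: "\<sigma> \<in> F_cover V E k"
  then obtain s1 s2 s3 where e: "\<sigma> = {s1,s2,s3}" and S: "s1 \<in> Sk V E k" "s2 \<in> Sk V E k" "s3 \<in> Sk V E k"
    and g: "graph_union (graph_union (induced E (fst s1)) (induced E (fst s2))) (induced E (fst s3)) = (V, E)"
    unfolding F_cover_def by blast
  have sub: "fst s1 \<subseteq> V" "fst s2 \<subseteq> V" "fst s3 \<subseteq> V"
    using S unfolding Sk_def by (auto dest: sep_sub)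
  have cv: "cov V E (fst s1) (fst s2) (fst s3)" by (rule graph_eq_cov[OF assms(1) sub, THEN iffD1, OF g])
  have i: "s1 \<in> Or" "s2 \<in> Or" "s3 \<in> Or" using sO e by auto
  show False using main[OF assms(1,4,5,6), rule_format, OF refl i cv] .
qed

end
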